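(* Let $\alpha:X\to P(A\times X+1)$ be a discrete probabilistic transition system and let $\tilde\alpha^\#=\langle\tilde\alpha^\#_1,\tilde\alpha^\#_*,a\mapsto\tau_a\rangle:DX\to \mathbb I\times\mathbb I\times(DX)^A$ be $$\tilde\alpha^\#_1(u)=\sum_{x\in X}u(x)\sum_{z\in A\times X+1}\alpha(x)(z),\quad \tilde\alpha^\#_*(u)=\sum_{x\in X}u(x)\alpha(x)( * ),\quad \tau_a(u)(y)=\sum_{x\in X}u(x)\alpha(x)(a,y).$$ Then there is a unique map $[\![-]\!]:DX\to\mathcal M(A^\infty)$ such that for all $u\in DX$, $a\in A$: $[\![u]\!](A^\infty)=\tilde\alpha^\#_1(u)$, $[\![u]\!](\{\varepsilon\})=\tilde\alpha^\#_*(u)$, and $[\![u]\!]_a=[\![\tau_a(u)]\!]$ (i.e. $[\![-]\!]$ is an $F$-coalgebra morphism from $\tilde\alpha^\#$ to $\Pi$). Moreover, writing $\langle\!\langle x\rangle\!\rangle=[\![\delta_x]\!]$, for every $u\in DX$, $$[\![u]\!]=\sum_{x\in X}u(x)\,\langle\!\langle x\rangle\!\rangle.$$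
   Context: $X$ is a set, $A$ a finite alphabet, $1=\{*\}$, $\mathbb I=[0,1]$. $PY$ (resp. $DY$) is the set of finitely supported functions $u:Y\to\mathbb I$ with $\sum_y u(y)=1$ (resp. $\le1$). $\delta_x\in DX$ is the point mass at $x$. $A^\infty=A^*\cup A^\omega$ (finite and infinite words, empty word $\varepsilon$) with $\sigma$-algebra generated by $\{\emptyset\}\cup\{\{w\}\mid w\in A^*\}\cup\{wA^\infty\mid w\in A^*\}$, $wS=\{wv\mid v\in S\}$. $\mathcal M(A^\infty)$ is the set of sub-probability measures on $A^\infty$; for $m\in\mathcal M(A^\infty)$ and $a\in A$, $m_a(S)=m(aS)$. The coalgebra $\Pi:\mathcal M(A^\infty)\to\mathbb I\times\mathbb I\times\mathcal M(A^\infty)^A$ is $\Pi(m)=\langle m(A^\infty),m(\{\varepsilon\}),a\mapsto m_a\rangle$. *)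

theory Defs
  imports "HOL-Probability.Probability"
begin

definition supp :: "('y \<Rightarrow> real) \<Rightarrow> 'y set" where
  "supp u = {y. u y \<noteq> 0}"

definition PD :: "('y \<Rightarrow> real) set" where
  "PD = {u. finite (supp u) \<and> (\<forall>y. 0 \<le> u y \<and> u y \<le> 1) \<and> sum u (supp u) = 1}"

definition DD :: "('y \<Rightarrow> real) set" where
  "DD = {u. finite (supp u) \<and> (\<forall>y. 0 \<le> u y \<and> u y \<le> 1) \<and> sum u (supp u) \<le> 1}"

definition point_mass :: "'y \<Rightarrow> 'y \<Rightarrow> real" where
  "point_mass x = (\<lambda>y. if y = x then 1 else 0)"

text \<open>A word in A^\<infinity> is encoded as a function nat \<Rightarrow> 'a option which, once
  undefined, stays undefined: finite words are those with some undefined position.\<close>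
definition winf :: "(nat \<Rightarrow> 'a option) set" where
  "winf = {w. \<forall>n. w n = None \<longrightarrow> w (Suc n) = None}"

definition of_list :: "'a list \<Rightarrow> nat \<Rightarrow> 'a option" where
  "of_list xs = (\<lambda>n. if n < length xs then Some (xs ! n) else None)"

definition eps :: "nat \<Rightarrow> 'a option" where
  "eps = of_list []"

definition wapp :: "'a list \<Rightarrow> (nat \<Rightarrow> 'a option) \<Rightarrow> nat \<Rightarrow> 'a option" where
  "wapp xs v = (\<lambda>n. if n < length xs then Some (xs ! n) else v (n - length xs))"

definition wgen :: "(nat \<Rightarrow> 'a option) set set" where
  "wgen = {{}} \<union> {{of_list w} | w. True} \<union> {wapp w ` winf | w. True}"

definition Ainf :: "(nat \<Rightarrow> 'a option) measure" where
  "Ainf = sigma winf wgen"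

definition Msub :: "(nat \<Rightarrow> 'a option) measure set" where
  "Msub = {m. sets m = sets Ainf \<and> subprob_space m}"

definition alpha1 :: "('x \<Rightarrow> ('a \<times> 'x) option \<Rightarrow> real) \<Rightarrow> ('x \<Rightarrow> real) \<Rightarrow> real" where
  "alpha1 \<alpha> u = (\<Sum>x\<in>supp u. u x * (\<Sum>z\<in>supp (\<alpha> x). \<alpha> x z))"

definition alphastar :: "('x \<Rightarrow> ('a \<times> 'x) option \<Rightarrow> real) \<Rightarrow> ('x \<Rightarrow> real) \<Rightarrow> real" where
  "alphastar \<alpha> u = (\<Sum>x\<in>supp u. u x * \<alpha> x None)"

definition tau :: "('x \<Rightarrow> ('a \<times> 'x) option \<Rightarrow> real) \<Rightarrow> 'a \<Rightarrow> ('x \<Rightarrow> real) \<Rightarrow> 'x \<Rightarrow> real" where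
  "tau \<alpha> a u = (\<lambda>y. \<Sum>x\<in>supp u. u x * \<alpha> x (Some (a, y)))"

definition is_morph :: "('x \<Rightarrow> ('a \<times> 'x) option \<Rightarrow> real) \<Rightarrow> (('x \<Rightarrow> real) \<Rightarrow> (nat \<Rightarrow> 'a option) measure) \<Rightarrow> bool" where
  "is_morph \<alpha> sem \<longleftrightarrow> (\<forall>u\<in>DD.
      sem u \<in> Msub \<and>
      emeasure (sem u) winf = ennreal (alpha1 \<alpha> u) \<and>
      emeasure (sem u) {eps} = ennreal (alphastar \<alpha> u) \<and>
      (\<forall>a. \<forall>S\<in>sets Ainf. emeasure (sem u) (wapp [a] ` S) = emeasure (sem (tau \<alpha> a u)) S))"

end

theory Submission
  imports Defs
begin



lemma of_list_winf[simp]: "of_list w \<in> winf"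
  by (auto simp: winf_def of_list_def)

lemma wapp_winf[simp]: "v \<in> winf \<Longrightarrow> wapp w v \<in> winf"
  by (auto simp: winf_def wapp_def Suc_diff_le)

lemma wgen_Pow: "wgen \<subseteq> Pow winf"
  by (auto simp: wgen_def)

lemma space_Ainf[simp]: "space Ainf = winf"
  unfolding Ainf_def by (rule space_measure_of[OF wgen_Pow])

lemma sets_Ainf: "sets Ainf = sigma_sets winf wgen"
  unfolding Ainf_def by (rule sets_measure_of[OF wgen_Pow])

lemma wapp_Nil[simp]: "wapp [] v = v"
  by (simp add: wapp_def)

lemma wapp_Nil_img[simp]: "wapp [] ` winf = winf"
  by simp

lemma wapp_Cons: "wapp (a#w) v = wapp [a] (wapp w v)"
  by (rule ext) (auto simp: wapp_def nth_Cons split: nat.splits)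

lemma of_list_Cons: "of_list (a#w) = wapp [a] (of_list w)"
  by (rule ext) (auto simp: wapp_def of_list_def nth_Cons split: nat.splits)

lemma wapp_single_in: "wapp [a] v \<in> wapp [b] ` S \<longleftrightarrow> a = b \<and> v \<in> S"
proof
  assume "wapp [a] v \<in> wapp [b] ` S"
  then obtain v' where "v' \<in> S" "wapp [a] v = wapp [b] v'" by auto
  then have h: "\<And>n. wapp [a] v n = wapp [b] v' n" by simp
  from h[of 0] have "a = b" by (simp add: wapp_def)
  moreover have "\<forall>n. v n = v' n" using h[of "Suc n" for n] by (simp add: wapp_def)
  ultimately show "a = b \<and> v \<in> S" using \<open>v' \<in> S\<close> by (metis ext)
qed auto

lemma wapp_ne_eps: "wapp [a] v \<noteq> eps"
proof
  assume "wapp [a] v = eps"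
  then have "wapp [a] v 0 = eps 0" by simp
  then show False by (simp add: wapp_def eps_def of_list_def)
qed

lemma cyl_char:
  assumes "v \<in> winf"
  shows "v \<in> wapp w ` winf \<longleftrightarrow> (\<forall>i<length w. v i = Some (w!i))"
proof
  assume "v \<in> wapp w ` winf" then show "\<forall>i<length w. v i = Some (w!i)"
    by (auto simp: wapp_def)
next
  assume h: "\<forall>i<length w. v i = Some (w!i)"
  have "(\<lambda>n. v (n + length w)) \<in> winf" using assms by (auto simp: winf_def)
  moreover have "v = wapp w (\<lambda>n. v (n + length w))"
    using h by (auto simp: wapp_def)
  ultimately show "v \<in> wapp w ` winf" by blast
qed

lemma sing_char:
  assumes "v \<in> winf"
  shows "v = of_list w \<longleftrightarrow> (\<forall>i\<le>length w. v i = of_list w i)"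
proof
  assume h: "\<forall>i\<le>length w. v i = of_list w i"
  have tail: "v (length w + k) = None" for k
  proof (induction k)
    case 0 then show ?case using h by (simp add: of_list_def)
  next
    case (Suc k) then show ?case using assms by (auto simp: winf_def)
  qed
  then have "v n = of_list w n" for n
  proof (cases "n \<le> length w")
    case False
    then have "v (length w + (n - length w)) = None" using tail by blast
    then show ?thesis using False by (simp add: of_list_def)
  qed (use h in auto)
  then show "v = of_list w" by auto
qed auto

lemma Int_stable_wgen: "Int_stable (wgen :: (nat \<Rightarrow> 'a option) set set)"
proof (rule Int_stableI)
  fix X Y :: "(nat \<Rightarrow> 'a option) set" assume X: "X \<in> wgen" and Y: "Y \<in> wgen"
  have sing: "{a} \<inter> Z \<in> wgen" if "{a} \<in> wgen" for a Z
    using that by (cases "a \<in> Z") (auto simp: wgen_def)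
  have cyl: "wapp v ` winf \<inter> wapp w ` winf \<in> wgen" if le: "length v \<le> length w" for v w :: "'a list"
  proof (cases "\<forall>i<length v. v!i = w!i")
    case True
    have "wapp v ` winf \<inter> wapp w ` winf = wapp w ` winf"
    proof -
      have "wapp w ` winf \<subseteq> wapp v ` winf"
      proof
        fix z assume z: "z \<in> wapp w ` winf"
        then have zw: "z \<in> winf" by auto
        show "z \<in> wapp v ` winf"
          using z True le unfolding cyl_char[OF zw] by auto
      qed
      then show ?thesis by blast
    qed
    then show ?thesis by (auto simp: wgen_def)
  next
    case False
    then obtain i where i: "i < length v" "v!i \<noteq> w!i" by auto
    have "wapp v ` winf \<inter> wapp w ` winf = {}"
    proof (rule ccontr)
      assume "wapp v ` winf \<inter> wapp w ` winf \<noteq> {}"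
      then obtain z where z: "z \<in> wapp v ` winf" "z \<in> wapp w ` winf" by blast
      then have zw: "z \<in> winf" by auto
      show False using z i le unfolding cyl_char[OF zw] by force
    qed
    then show ?thesis by (auto simp: wgen_def)
  qed
  show "X \<inter> Y \<in> wgen"
  proof -
    consider "X = {}" | "Y = {}" | a where "X = {a}" "{a} \<in> wgen" | a where "Y = {a}" "{a} \<in> wgen"
      | v w where "X = wapp v ` winf" "Y = wapp w ` winf"
      using X Y unfolding wgen_def by blast
    then show ?thesis
    proof cases
      case 1 then show ?thesis by (simp add: wgen_def)
    next
      case 2 then show ?thesis by (simp add: wgen_def)
    next
      case 3 then show ?thesis using sing by simp
    next
      case 4 then show ?thesis using sing[of a X] by (simp add: Int_commute)
    next
      case 5 then show ?thesis
        using cyl[of v w] cyl[of w v] by (cases "length v \<le> length w") (auto simp: Int_commute)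
    qed
  qed
qed



definition Pm :: "('x \<Rightarrow> ('a \<times> 'x) option \<Rightarrow> real) \<Rightarrow> 'x \<Rightarrow> ('a \<times> 'x) option pmf" where
  "Pm \<alpha> x = embed_pmf (\<alpha> x)"

definition clean :: "('x \<Rightarrow> ('a \<times> 'x) option \<Rightarrow> real) \<Rightarrow> 'x \<Rightarrow> ('a \<times> 'x) option \<Rightarrow> ('a \<times> 'x) option" where
  "clean \<alpha> x z = (if z \<in> supp (\<alpha> x) then z else (SOME z. z \<in> supp (\<alpha> x)))"

definition M0 :: "('x \<Rightarrow> ('a \<times> 'x) option \<Rightarrow> real) \<Rightarrow> ('x \<Rightarrow> ('a \<times> 'x) option) measure" where
  "M0 \<alpha> = PiM UNIV (\<lambda>x. measure_pmf (Pm \<alpha> x))"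

definition SS :: "('x \<Rightarrow> ('a \<times> 'x) option \<Rightarrow> real) \<Rightarrow> ('x \<Rightarrow> ('a \<times> 'x) option) stream measure" where
  "SS \<alpha> = stream_space (M0 \<alpha>)"

primrec tr :: "('x \<Rightarrow> ('a \<times> 'x) option \<Rightarrow> real) \<Rightarrow> nat \<Rightarrow> 'x \<Rightarrow> ('x \<Rightarrow> ('a \<times> 'x) option) stream \<Rightarrow> 'a option" where
  "tr \<alpha> 0 x \<omega> = map_option fst (clean \<alpha> x (shd \<omega> x))"
| "tr \<alpha> (Suc n) x \<omega> = (case clean \<alpha> x (shd \<omega> x) of None \<Rightarrow> None | Some (a, y) \<Rightarrow> tr \<alpha> n y (stl \<omega>))"

definition trace :: "('x \<Rightarrow> ('a \<times> 'x) option \<Rightarrow> real) \<Rightarrow> 'x \<Rightarrow> ('x \<Rightarrow> ('a \<times> 'x) option) stream \<Rightarrow> nat \<Rightarrow> 'a option" where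
  "trace \<alpha> x \<omega> = (\<lambda>n. tr \<alpha> n x \<omega>)"

definition T :: "('x \<Rightarrow> ('a \<times> 'x) option \<Rightarrow> real) \<Rightarrow> 'x \<Rightarrow> (nat \<Rightarrow> 'a option) measure" where
  "T \<alpha> x = distr (SS \<alpha>) Ainf (trace \<alpha> x)"

definition sem :: "('x \<Rightarrow> ('a \<times> 'x) option \<Rightarrow> real) \<Rightarrow> ('x \<Rightarrow> real) \<Rightarrow> (nat \<Rightarrow> 'a option) measure" where
  "sem \<alpha> u = density (count_space UNIV) (\<lambda>x. ennreal (u x)) \<bind> T \<alpha>"

lemma tr_None: "tr \<alpha> n x \<omega> = None \<Longrightarrow> tr \<alpha> (Suc n) x \<omega> = None"
proof (induction n arbitrary: x \<omega>)
  case 0 then show ?case by (auto split: option.splits)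
next
  case (Suc n)
  show ?case
  proof (cases "clean \<alpha> x (shd \<omega> x)")
    case None then show ?thesis by simp
  next
    case (Some p)
    obtain a y where p: "p = (a, y)" by (cases p)
    have e1: "tr \<alpha> (Suc m) x \<omega> = tr \<alpha> m y (stl \<omega>)" for m using Some p by simp
    show ?thesis using e1[of n] e1[of "Suc n"] Suc.prems Suc.IH[of y "stl \<omega>"] by simp
  qed
qed

lemma trace_winf: "trace \<alpha> x \<omega> \<in> winf"
  unfolding winf_def trace_def mem_Collect_eq by (blast intro: tr_None)

lemma trace_Stream: "trace \<alpha> x (f ## \<omega>) =
   (case clean \<alpha> x (f x) of None \<Rightarrow> eps | Some (a, y) \<Rightarrow> wapp [a] (trace \<alpha> y \<omega>))"
proof (rule ext)
  fix n show "trace \<alpha> x (f ## \<omega>) n =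
   (case clean \<alpha> x (f x) of None \<Rightarrow> eps | Some (a, y) \<Rightarrow> wapp [a] (trace \<alpha> y \<omega>)) n"
    by (cases n) (auto simp: trace_def eps_def of_list_def wapp_def split: option.splits)
qed

context
  fixes \<alpha> :: "'x \<Rightarrow> ('a::finite \<times> 'x) option \<Rightarrow> real"
  assumes PDa: "\<forall>x. \<alpha> x \<in> PD"
begin

lemma a_nonneg: "0 \<le> \<alpha> x z" using PDa by (auto simp: PD_def)
lemma a_le1: "\<alpha> x z \<le> 1" using PDa by (auto simp: PD_def)
lemma a_fin: "finite (supp (\<alpha> x))" using PDa by (auto simp: PD_def)
lemma a_sum: "sum (\<alpha> x) (supp (\<alpha> x)) = 1" using PDa by (auto simp: PD_def)
lemma a_supp_ne: "supp (\<alpha> x) \<noteq> {}" using a_sum[of x] by auto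

lemma a_int: "(\<integral>\<^sup>+z. ennreal (\<alpha> x z) \<partial>count_space UNIV) = 1"
proof -
  have "(\<integral>\<^sup>+z. ennreal (\<alpha> x z) \<partial>count_space UNIV) = (\<Sum>z\<in>supp (\<alpha> x). ennreal (\<alpha> x z))"
    by (rule nn_integral_count_space') (use a_fin[of x] in \<open>auto simp: supp_def\<close>)
  also have "\<dots> = 1" using a_sum[of x] a_nonneg by (simp add: sum_ennreal)
  finally show ?thesis .
qed

lemma pmf_Pm[simp]: "pmf (Pm \<alpha> x) z = \<alpha> x z"
  unfolding Pm_def by (rule pmf_embed_pmf) (use a_nonneg a_int in auto)

lemma set_Pm[simp]: "set_pmf (Pm \<alpha> x) = supp (\<alpha> x)"
  unfolding Pm_def by (subst set_embed_pmf) (use a_nonneg a_int in \<open>auto simp: supp_def\<close>)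

lemma clean_supp: "clean \<alpha> x z \<in> supp (\<alpha> x)"
  unfolding clean_def using a_supp_ne[of x] by (auto intro: someI_ex)

lemma clean_id: "z \<in> supp (\<alpha> x) \<Longrightarrow> clean \<alpha> x z = z"
  unfolding clean_def by simp

lemma prob_M0: "prob_space (M0 \<alpha>)"
  unfolding M0_def by (rule prob_space_PiM) (rule prob_space_measure_pmf)

lemma prob_SS: "prob_space (SS \<alpha>)"
  unfolding SS_def by (rule prob_space.prob_space_stream_space[OF prob_M0])

lemma meas_cl: "(\<lambda>\<omega>. clean \<alpha> x (shd \<omega> x)) \<in> measurable (SS \<alpha>) (count_space UNIV)"
proof -
  have "(\<lambda>\<omega>. shd \<omega> x) \<in> measurable (SS \<alpha>) (measure_pmf (Pm \<alpha> x))"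
    unfolding SS_def M0_def
    by (rule measurable_compose[OF measurable_shd measurable_component_singleton]) simp
  then have "(\<lambda>\<omega>. shd \<omega> x) \<in> measurable (SS \<alpha>) (count_space UNIV)" by simp
  then show ?thesis by (rule measurable_compose) simp
qed

lemma meas_cl2: "(\<lambda>\<omega>. clean \<alpha> x (shd \<omega> x)) \<in> measurable (SS \<alpha>) (count_space (supp (\<alpha> x)))"
proof -
  have "(\<lambda>\<omega>. clean \<alpha> x (shd \<omega> x)) -` {a} \<inter> space (SS \<alpha>) \<in> sets (SS \<alpha>)" for a
    using measurable_sets[OF meas_cl, of "{a}"] by simp
  then show ?thesis
    by (subst measurable_count_space_eq2) (auto simp: a_fin clean_supp)
qed

lemma meas_tr: "(\<lambda>\<omega>. tr \<alpha> n x \<omega>) \<in> measurable (SS \<alpha>) (count_space UNIV)"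
proof (induction n arbitrary: x)
  case 0
  show ?case by (simp, rule measurable_compose[OF meas_cl]) simp
next
  case (Suc n)
  have "(\<lambda>\<omega>. (\<lambda>z \<omega>. case z of None \<Rightarrow> None | Some (a, y) \<Rightarrow> tr \<alpha> n y (stl \<omega>)) (clean \<alpha> x (shd \<omega> x)) \<omega>)
     \<in> measurable (SS \<alpha>) (count_space UNIV)"
  proof (rule measurable_compose_countable'[OF _ meas_cl2])
    fix z :: "('a \<times> 'x) option"
    show "(\<lambda>\<omega>. case z of None \<Rightarrow> None | Some (a, y) \<Rightarrow> tr \<alpha> n y (stl \<omega>)) \<in> measurable (SS \<alpha>) (count_space UNIV)"
    proof (cases z)
      case (Some p) then show ?thesis
        by (cases p) (simp, rule measurable_compose[OF _ Suc.IH], unfold SS_def, rule measurable_stl)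
    qed simp
  qed (simp add: a_fin countable_finite)
  then show ?case by simp
qed

lemma meas_trace: "trace \<alpha> x \<in> measurable (SS \<alpha>) Ainf"
  unfolding Ainf_def
proof (rule measurable_measure_of[OF wgen_Pow])
  show "trace \<alpha> x \<in> space (SS \<alpha>) \<rightarrow> winf" using trace_winf by auto
next
  fix G :: "(nat \<Rightarrow> 'a option) set" assume "G \<in> wgen"
  then consider "G = {}" | w where "G = {of_list w}" | w where "G = wapp w ` winf"
    unfolding wgen_def by blast
  then show "trace \<alpha> x -` G \<inter> space (SS \<alpha>) \<in> sets (SS \<alpha>)"
  proof cases
    case 1 then show ?thesis by simp
  next
    case 2
    have "trace \<alpha> x -` G \<inter> space (SS \<alpha>) = (\<Inter>i\<in>{..length w}. (\<lambda>\<omega>. tr \<alpha> i x \<omega>) -` {of_list w i} \<inter> space (SS \<alpha>))"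
    proof -
      have "trace \<alpha> x \<omega> \<in> G \<longleftrightarrow> (\<forall>i\<le>length w. tr \<alpha> i x \<omega> = of_list w i)" for \<omega>
        using sing_char[OF trace_winf, of \<alpha> x \<omega> w] by (simp add: 2 trace_def)
      then show ?thesis by auto
    qed
    also have "\<dots> \<in> sets (SS \<alpha>)"
      by (intro sets.finite_INT measurable_sets[OF meas_tr]) auto
    finally show ?thesis .
  next
    case 3
    show ?thesis
    proof (cases w)
      case Nil
      have "trace \<alpha> x -` G \<inter> space (SS \<alpha>) = space (SS \<alpha>)"
        using 3 Nil trace_winf by auto
      then show ?thesis by simp
    next
      case (Cons a w')
      have "trace \<alpha> x -` G \<inter> space (SS \<alpha>) = (\<Inter>i\<in>{..<length w}. (\<lambda>\<omega>. tr \<alpha> i x \<omega>) -` {Some (w!i)} \<inter> space (SS \<alpha>))"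
      proof -
        have "trace \<alpha> x \<omega> \<in> G \<longleftrightarrow> (\<forall>i<length w. tr \<alpha> i x \<omega> = Some (w!i))" for \<omega>
          using cyl_char[OF trace_winf, of \<alpha> x \<omega> w] by (simp add: 3 trace_def)
        then show ?thesis using Cons by auto
      qed
      also have "\<dots> \<in> sets (SS \<alpha>)"
        using Cons by (intro sets.finite_INT measurable_sets[OF meas_tr]) auto
      finally show ?thesis .
    qed
  qed
qed

end


lemma inj_wapp1: "inj (wapp [a])"
proof (rule injI)
  fix x y assume "wapp [a] x = wapp [a] y"
  then have "wapp [a] x \<in> wapp [a] ` {y}" by simp
  then show "x = y" unfolding wapp_single_in by simp
qed

lemma wapp_sets:
  assumes "S \<in> sets Ainf" shows "wapp [a] ` S \<in> sets Ainf"
  using assms unfolding sets_Ainf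
proof (induction rule: sigma_sets.induct)
  case (Basic G)
  then consider "G = {}" | w where "G = {of_list w}" | w where "G = wapp w ` winf"
    unfolding wgen_def by blast
  then show ?case
  proof cases
    case 1 then show ?thesis by (simp add: sigma_sets.Empty)
  next
    case 2
    then have "wapp [a] ` G = {of_list (a#w)}" by (simp add: of_list_Cons)
    then show ?thesis by (auto intro!: sigma_sets.Basic simp: wgen_def)
  next
    case 3
    then have "wapp [a] ` G = wapp (a#w) ` winf" by (auto simp: image_image wapp_Cons[of a w])
    then show ?thesis by (auto intro!: sigma_sets.Basic simp: wgen_def)
  qed
next
  case Empty then show ?case by (simp add: sigma_sets.Empty)
next
  case (Compl S)
  interpret sa: sigma_algebra winf "sigma_sets winf wgen"
    by (rule sigma_algebra_sigma_sets[OF wgen_Pow])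
  have "wapp [a] ` (winf - S) = wapp [a] ` winf - wapp [a] ` S"
    by (rule image_set_diff[OF inj_wapp1])
  moreover have "wapp [a] ` winf \<in> sigma_sets winf wgen"
    by (rule sigma_sets.Basic) (auto simp: wgen_def)
  ultimately show ?case using Compl.IH by auto
next
  case (Union A)
  have "wapp [a] ` (\<Union>i. A i) = (\<Union>i. wapp [a] ` A i)" by blast
  then show ?case using Union.IH by (simp add: sigma_sets.Union)
qed

definition K :: "('x \<Rightarrow> ('a \<times> 'x) option \<Rightarrow> real) \<Rightarrow> ('a \<times> 'x) option \<Rightarrow> (nat \<Rightarrow> 'a option) set \<Rightarrow> ennreal" where
  "K \<alpha> z B = emeasure (SS \<alpha>) {\<omega>\<in>space (SS \<alpha>). (case z of None \<Rightarrow> eps | Some (a, y) \<Rightarrow> wapp [a] (trace \<alpha> y \<omega>)) \<in> B}"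

context
  fixes \<alpha> :: "'x \<Rightarrow> ('a::finite \<times> 'x) option \<Rightarrow> real"
  assumes PDa: "\<forall>x. \<alpha> x \<in> PD"
begin

lemma sets_T[simp]: "sets (T \<alpha> x) = sets Ainf"
  by (simp add: T_def)

lemma prob_T: "prob_space (T \<alpha> x)"
  unfolding T_def by (rule prob_space.prob_space_distr[OF prob_SS[OF PDa] meas_trace[OF PDa]])

lemma space_M0[simp]: "space (M0 \<alpha>) = UNIV"
  by (simp add: M0_def space_PiM)

lemma T_decomp:
  assumes B: "B \<in> sets Ainf"
  shows "emeasure (T \<alpha> x) B = (\<Sum>z\<in>supp (\<alpha> x). ennreal (\<alpha> x z) * K \<alpha> z B)"
proof -
  interpret M0: prob_space "M0 \<alpha>" by (rule prob_M0[OF PDa])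
  have X: "trace \<alpha> x -` B \<inter> space (SS \<alpha>) \<in> sets (stream_space (M0 \<alpha>))"
    using measurable_sets[OF meas_trace[OF PDa] B] by (simp add: SS_def)
  have "emeasure (T \<alpha> x) B = emeasure (SS \<alpha>) (trace \<alpha> x -` B \<inter> space (SS \<alpha>))"
    unfolding T_def by (rule emeasure_distr[OF meas_trace[OF PDa] B])
  also have "\<dots> = (\<integral>\<^sup>+t. emeasure (SS \<alpha>) {\<omega>\<in>space (SS \<alpha>). t ## \<omega> \<in> trace \<alpha> x -` B \<inter> space (SS \<alpha>)} \<partial>M0 \<alpha>)"
    unfolding SS_def by (rule prob_space.emeasure_stream_space[OF prob_M0[OF PDa]]) (use X in \<open>simp add: SS_def\<close>)
  also have "\<dots> = (\<integral>\<^sup>+t. K \<alpha> (clean \<alpha> x (t x)) B \<partial>M0 \<alpha>)"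
  proof (rule nn_integral_cong)
    fix t assume "t \<in> space (M0 \<alpha>)"
    have "{\<omega>\<in>space (SS \<alpha>). t ## \<omega> \<in> trace \<alpha> x -` B \<inter> space (SS \<alpha>)} =
      {\<omega>\<in>space (SS \<alpha>). (case clean \<alpha> x (t x) of None \<Rightarrow> eps | Some (a, y) \<Rightarrow> wapp [a] (trace \<alpha> y \<omega>)) \<in> B}"
      by (auto simp: SS_def space_stream_space trace_Stream)
    then show "emeasure (SS \<alpha>) {\<omega>\<in>space (SS \<alpha>). t ## \<omega> \<in> trace \<alpha> x -` B \<inter> space (SS \<alpha>)} = K \<alpha> (clean \<alpha> x (t x)) B"
      by (simp add: K_def)
  qed
  also have "\<dots> = (\<integral>\<^sup>+v. K \<alpha> (clean \<alpha> x v) B \<partial>distr (M0 \<alpha>) (measure_pmf (Pm \<alpha> x)) (\<lambda>\<omega>. \<omega> x))"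
    by (subst nn_integral_distr) (auto simp: M0_def)
  also have "distr (M0 \<alpha>) (measure_pmf (Pm \<alpha> x)) (\<lambda>\<omega>. \<omega> x) = measure_pmf (Pm \<alpha> x)"
    unfolding M0_def by (rule distr_PiM_component) (auto intro: prob_space_measure_pmf)
  also have "(\<integral>\<^sup>+v. K \<alpha> (clean \<alpha> x v) B \<partial>measure_pmf (Pm \<alpha> x)) =
      (\<Sum>v\<in>supp (\<alpha> x). K \<alpha> (clean \<alpha> x v) B * pmf (Pm \<alpha> x) v)"
    by (rule nn_integral_measure_pmf_support) (auto simp: a_fin[OF PDa] set_Pm[OF PDa])
  also have "\<dots> = (\<Sum>z\<in>supp (\<alpha> x). ennreal (\<alpha> x z) * K \<alpha> z B)"
    by (rule sum.cong) (auto simp: clean_id[OF PDa] pmf_Pm[OF PDa] mult.commute)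
  finally show ?thesis .
qed

lemma eps_sets: "{eps} \<in> sets Ainf"
  unfolding sets_Ainf eps_def by (rule sigma_sets.Basic) (auto simp: wgen_def)

lemma T_eps: "emeasure (T \<alpha> x) {eps} = ennreal (\<alpha> x None)"
proof -
  interpret S: prob_space "SS \<alpha>" by (rule prob_SS[OF PDa])
  have "ennreal (\<alpha> x z) * K \<alpha> z {eps} = (if z = None then ennreal (\<alpha> x z) else 0)" for z
    by (cases z) (auto simp: K_def S.emeasure_space_1 wapp_ne_eps)
  then have "emeasure (T \<alpha> x) {eps} = (\<Sum>z\<in>supp (\<alpha> x). if z = None then ennreal (\<alpha> x z) else 0)"
    by (simp add: T_decomp[OF eps_sets])
  also have "\<dots> = ennreal (\<alpha> x None)"
    by (simp add: a_fin[OF PDa]) (auto simp: supp_def)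
  finally show ?thesis .
qed

lemma T_cyl:
  assumes S: "S \<in> sets Ainf"
  shows "emeasure (T \<alpha> x) (wapp [a] ` S) = (\<Sum>z\<in>supp (\<alpha> x). ennreal (\<alpha> x z) *
     (case z of None \<Rightarrow> 0 | Some (b, y) \<Rightarrow> if b = a then emeasure (T \<alpha> y) S else 0))"
proof -
  have "K \<alpha> z (wapp [a] ` S) = (case z of None \<Rightarrow> 0 | Some (b, y) \<Rightarrow> if b = a then emeasure (T \<alpha> y) S else 0)" for z
  proof (cases z)
    case None
    have "eps \<notin> wapp [a] ` S" using wapp_ne_eps[of a] by (metis imageE)
    then show ?thesis using None by (simp add: K_def)
  next
    case (Some p)
    obtain b y where p: "p = (b, y)" by (cases p)
    show ?thesis
    proof (cases "b = a")
      case True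
      have "K \<alpha> z (wapp [a] ` S) = emeasure (SS \<alpha>) (trace \<alpha> y -` S \<inter> space (SS \<alpha>))"
      proof -
        have "{\<omega> \<in> space (SS \<alpha>). wapp [a] (trace \<alpha> y \<omega>) \<in> wapp [a] ` S} = trace \<alpha> y -` S \<inter> space (SS \<alpha>)"
          by (auto simp: wapp_single_in)
        then show ?thesis by (simp add: K_def Some p True)
      qed
      also have "\<dots> = emeasure (T \<alpha> y) S"
        unfolding T_def by (rule emeasure_distr[OF meas_trace[OF PDa] S, symmetric])
      finally show ?thesis using Some p True by simp
    next
      case False then show ?thesis using Some p by (auto simp: K_def wapp_single_in)
    qed
  qed
  then show ?thesis by (simp add: T_decomp[OF wapp_sets[OF S]])
qed

end


lemma in_supp[simp]: "y \<in> supp u \<longleftrightarrow> u y \<noteq> 0" by (simp add: supp_def)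

lemma DD_fin: "u \<in> DD \<Longrightarrow> finite (supp u)" by (simp add: DD_def)
lemma DD_nn: "u \<in> DD \<Longrightarrow> 0 \<le> u x" by (simp add: DD_def)
lemma DD_sum: "u \<in> DD \<Longrightarrow> sum u (supp u) \<le> 1" by (simp add: DD_def)

context
  fixes \<alpha> :: "'x \<Rightarrow> ('a::finite \<times> 'x) option \<Rightarrow> real"
  assumes PDa: "\<forall>x. \<alpha> x \<in> PD"
begin

lemma sem_sets[simp]: "sets (sem \<alpha> u) = sets Ainf"
  unfolding sem_def by (rule sets_bind) (auto simp: sets_T[OF PDa])

lemma space_sem[simp]: "space (sem \<alpha> u) = winf"
  using sets_eq_imp_space_eq[OF sem_sets] by simp

lemma sem_emeasure:
  assumes u: "finite (supp u)" and S: "S \<in> sets Ainf"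
  shows "emeasure (sem \<alpha> u) S = (\<Sum>x\<in>supp u. ennreal (u x) * emeasure (T \<alpha> x) S)"
proof -
  have meas: "T \<alpha> \<in> measurable (density (count_space UNIV) (\<lambda>x. ennreal (u x))) (subprob_algebra Ainf)"
    using prob_T[OF PDa] by (auto simp: space_subprob_algebra prob_space_imp_subprob_space sets_T[OF PDa])
  have "emeasure (sem \<alpha> u) S = (\<integral>\<^sup>+x. emeasure (T \<alpha> x) S \<partial>density (count_space UNIV) (\<lambda>x. ennreal (u x)))"
    unfolding sem_def by (rule emeasure_bind[OF _ meas S]) simp
  also have "\<dots> = (\<integral>\<^sup>+x. ennreal (u x) * emeasure (T \<alpha> x) S \<partial>count_space UNIV)"
    by (rule nn_integral_density) auto
  also have "\<dots> = (\<Sum>x\<in>supp u. ennreal (u x) * emeasure (T \<alpha> x) S)"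
    by (rule nn_integral_count_space'[OF u]) auto
  finally show ?thesis .
qed

lemma T_space: "emeasure (T \<alpha> x) winf = 1"
proof -
  interpret prob_space "T \<alpha> x" by (rule prob_T[OF PDa])
  show ?thesis using emeasure_space_1 sets_eq_imp_space_eq[OF sets_T[OF PDa]] by simp
qed

lemma winf_sets: "winf \<in> sets Ainf"
  using sets.top[of Ainf] by simp

lemma sem_point: "emeasure (sem \<alpha> (point_mass x)) S = emeasure (T \<alpha> x) S" if "S \<in> sets Ainf"
proof -
  have "supp (point_mass x) = {x}" by (auto simp: supp_def point_mass_def)
  then show ?thesis by (simp add: sem_emeasure that point_mass_def)
qed

definition W :: "'a \<Rightarrow> ('x \<Rightarrow> real) \<Rightarrow> 'x set" where
  "W a u = (\<Union>x\<in>supp u. (\<lambda>y. Some (a, y)) -` supp (\<alpha> x))"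

lemma W_fin: "finite (supp u) \<Longrightarrow> finite (W a u)"
  unfolding W_def by (intro finite_UN_I finite_vimageI a_fin[OF PDa]) (auto simp: inj_def)

lemma tau_nn: "u \<in> DD \<Longrightarrow> 0 \<le> tau \<alpha> a u y"
  unfolding tau_def by (intro sum_nonneg mult_nonneg_nonneg DD_nn a_nonneg[OF PDa])

lemma supp_tau: "u \<in> DD \<Longrightarrow> supp (tau \<alpha> a u) \<subseteq> W a u"
proof
  fix y assume u: "u \<in> DD" and "y \<in> supp (tau \<alpha> a u)"
  then have "(\<Sum>x\<in>supp u. u x * \<alpha> x (Some (a, y))) \<noteq> 0" by (simp add: supp_def tau_def)
  then obtain x where "x \<in> supp u" "u x * \<alpha> x (Some (a, y)) \<noteq> 0"
    by (meson sum.neutral)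
  then show "y \<in> W a u" by (auto simp: W_def supp_def)
qed

lemma sum_W_le1: "finite V \<Longrightarrow> (\<Sum>y\<in>V. \<alpha> x (Some (a, y))) \<le> 1"
proof -
  assume V: "finite V"
  let ?I = "(\<lambda>y. Some (a, y)) ` V"
  have "(\<Sum>y\<in>V. \<alpha> x (Some (a, y))) = (\<Sum>z\<in>?I. \<alpha> x z)"
    by (subst sum.reindex) (auto simp: inj_on_def)
  also have "\<dots> \<le> (\<Sum>z\<in>?I \<union> supp (\<alpha> x). \<alpha> x z)"
    by (rule sum_mono2) (auto simp: V a_fin[OF PDa] a_nonneg[OF PDa])
  also have "\<dots> = (\<Sum>z\<in>supp (\<alpha> x). \<alpha> x z)"
    by (rule sum.mono_neutral_right) (auto simp: V a_fin[OF PDa])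
  also have "\<dots> = 1" by (rule a_sum[OF PDa])
  finally show ?thesis .
qed

lemma tau_sum_W: "u \<in> DD \<Longrightarrow> sum (tau \<alpha> a u) (supp (tau \<alpha> a u)) = (\<Sum>x\<in>supp u. u x * (\<Sum>y\<in>W a u. \<alpha> x (Some (a, y))))"
proof -
  assume u: "u \<in> DD"
  have "sum (tau \<alpha> a u) (supp (tau \<alpha> a u)) = sum (tau \<alpha> a u) (W a u)"
    by (rule sum.mono_neutral_left) (use W_fin[OF DD_fin[OF u]] supp_tau[OF u] in auto)
  also have "\<dots> = (\<Sum>x\<in>supp u. u x * (\<Sum>y\<in>W a u. \<alpha> x (Some (a, y))))"
    unfolding tau_def by (subst sum.swap) (simp add: sum_distrib_left)
  finally show ?thesis .
qed

lemma tau_DD: "u \<in> DD \<Longrightarrow> tau \<alpha> a u \<in> DD"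
proof -
  assume u: "u \<in> DD"
  have s: "sum (tau \<alpha> a u) (supp (tau \<alpha> a u)) \<le> 1"
  proof -
    have "(\<Sum>x\<in>supp u. u x * (\<Sum>y\<in>W a u. \<alpha> x (Some (a, y)))) \<le> (\<Sum>x\<in>supp u. u x * 1)"
      by (intro sum_mono mult_left_mono sum_W_le1 W_fin DD_fin[OF u] DD_nn[OF u])
    also have "\<dots> \<le> 1" using DD_sum[OF u] by simp
    finally show ?thesis using tau_sum_W[OF u] by simp
  qed
  have le: "tau \<alpha> a u y \<le> 1" for y
  proof -
    have "tau \<alpha> a u y \<le> (\<Sum>x\<in>supp u. u x * 1)"
      unfolding tau_def by (intro sum_mono mult_left_mono a_le1[OF PDa] DD_nn[OF u])
    also have "\<dots> \<le> 1" using DD_sum[OF u] by simp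
    finally show ?thesis .
  qed
  show ?thesis
    unfolding DD_def using s le tau_nn[OF u] finite_subset[OF supp_tau[OF u] W_fin[OF DD_fin[OF u]]]
    by auto
qed

lemma T_cyl_W:
  assumes S: "S \<in> sets Ainf" and V: "finite V" and sub: "(\<lambda>y. Some (a, y)) -` supp (\<alpha> x) \<subseteq> V"
  shows "emeasure (T \<alpha> x) (wapp [a] ` S) = (\<Sum>y\<in>V. ennreal (\<alpha> x (Some (a, y))) * emeasure (T \<alpha> y) S)"
proof -
  define g where "g z = ennreal (\<alpha> x z) *
     (case z of None \<Rightarrow> 0 | Some (b, y) \<Rightarrow> if b = a then emeasure (T \<alpha> y) S else 0)" for z
  let ?I = "(\<lambda>y. Some (a, y)) ` V"
  have "emeasure (T \<alpha> x) (wapp [a] ` S) = sum g (supp (\<alpha> x))"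
    unfolding g_def by (rule T_cyl[OF PDa S])
  also have "\<dots> = sum g (supp (\<alpha> x) \<union> ?I)"
  proof (rule sum.mono_neutral_left)
    show "\<forall>z\<in>supp (\<alpha> x) \<union> ?I - supp (\<alpha> x). g z = 0"
      by (auto simp: g_def)
  qed (auto simp: V a_fin[OF PDa])
  also have "\<dots> = sum g ?I"
  proof (rule sum.mono_neutral_right)
    show "\<forall>z\<in>supp (\<alpha> x) \<union> ?I - ?I. g z = 0"
    proof
      fix z assume z: "z \<in> supp (\<alpha> x) \<union> ?I - ?I"
      show "g z = 0"
      proof (cases z)
        case (Some p)
        obtain b y where p: "p = (b, y)" by (cases p)
        show ?thesis
        proof (cases "b = a")
          case True
          then have "y \<in> V" using z sub Some p by auto
          then show ?thesis using z Some p True by auto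
        qed (auto simp: g_def Some p)
      qed (simp add: g_def)
    qed
  qed (auto simp: V a_fin[OF PDa])
  also have "\<dots> = (\<Sum>y\<in>V. ennreal (\<alpha> x (Some (a, y))) * emeasure (T \<alpha> y) S)"
    by (subst sum.reindex) (auto simp: inj_on_def g_def)
  finally show ?thesis .
qed

lemma sem_tau:
  assumes u: "u \<in> DD" and S: "S \<in> sets Ainf"
  shows "emeasure (sem \<alpha> u) (wapp [a] ` S) = emeasure (sem \<alpha> (tau \<alpha> a u)) S"
proof -
  have fu: "finite (supp u)" by (rule DD_fin[OF u])
  have ft: "finite (supp (tau \<alpha> a u))" by (rule DD_fin[OF tau_DD[OF u]])
  have "emeasure (sem \<alpha> u) (wapp [a] ` S) = (\<Sum>x\<in>supp u. ennreal (u x) * emeasure (T \<alpha> x) (wapp [a] ` S))"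
    by (rule sem_emeasure[OF fu wapp_sets[OF S]])
  also have "\<dots> = (\<Sum>x\<in>supp u. ennreal (u x) * (\<Sum>y\<in>W a u. ennreal (\<alpha> x (Some (a, y))) * emeasure (T \<alpha> y) S))"
    by (rule sum.cong[OF refl], subst T_cyl_W[OF S W_fin[OF fu]]) (auto simp: W_def)
  also have "\<dots> = (\<Sum>y\<in>W a u. ennreal (tau \<alpha> a u y) * emeasure (T \<alpha> y) S)"
  proof -
    have "ennreal (tau \<alpha> a u y) = (\<Sum>x\<in>supp u. ennreal (u x) * ennreal (\<alpha> x (Some (a, y))))" for y
    proof -
      have "(\<Sum>x\<in>supp u. ennreal (u x) * ennreal (\<alpha> x (Some (a, y)))) = (\<Sum>x\<in>supp u. ennreal (u x * \<alpha> x (Some (a, y))))"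
        by (rule sum.cong) (auto simp: ennreal_mult DD_nn[OF u] a_nonneg[OF PDa])
      also have "\<dots> = ennreal (tau \<alpha> a u y)"
        unfolding tau_def by (rule sum_ennreal) (auto intro: mult_nonneg_nonneg DD_nn[OF u] a_nonneg[OF PDa])
      finally show ?thesis by simp
    qed
    then show ?thesis
      by (simp add: sum_distrib_left sum_distrib_right mult.assoc) (rule sum.swap)
  qed
  also have "\<dots> = (\<Sum>y\<in>supp (tau \<alpha> a u). ennreal (tau \<alpha> a u y) * emeasure (T \<alpha> y) S)"
    by (rule sum.mono_neutral_right) (use W_fin[OF fu] supp_tau[OF u] in auto)
  also have "\<dots> = emeasure (sem \<alpha> (tau \<alpha> a u)) S"
    by (rule sem_emeasure[OF ft S, symmetric])
  finally show ?thesis .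
qed

end


lemma cyl_sets: "wapp w ` winf \<in> sets Ainf"
  unfolding sets_Ainf by (rule sigma_sets.Basic) (auto simp: wgen_def)

lemma sing_sets: "{of_list w} \<in> sets Ainf"
  unfolding sets_Ainf by (rule sigma_sets.Basic) (auto simp: wgen_def)

context
  fixes \<alpha> :: "'x \<Rightarrow> ('a::finite \<times> 'x) option \<Rightarrow> real"
  assumes PDa: "\<forall>x. \<alpha> x \<in> PD"
begin

lemma morph_unique:
  assumes m1: "is_morph \<alpha> s1" and m2: "is_morph \<alpha> s2" and u: "u \<in> DD"
  shows "s1 u = s2 u"
proof -
  have cyl: "\<forall>u\<in>DD. emeasure (s1 u) (wapp w ` winf) = emeasure (s2 u) (wapp w ` winf)" for w
  proof (induction w)
    case Nil then show ?case using m1 m2 by (simp add: is_morph_def)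
  next
    case (Cons a w)
    show ?case
    proof
      fix u :: "'x \<Rightarrow> real" assume u: "u \<in> DD"
      have e: "wapp (a#w) ` winf = wapp [a] ` (wapp w ` winf)"
        by (auto simp: image_image wapp_Cons[of a w])
      show "emeasure (s1 u) (wapp (a#w) ` winf) = emeasure (s2 u) (wapp (a#w) ` winf)"
        unfolding e using m1 m2 u cyl_sets[of w] Cons.IH tau_DD[OF PDa u, of a]
        by (simp add: is_morph_def)
    qed
  qed
  have sing: "\<forall>u\<in>DD. emeasure (s1 u) {of_list w} = emeasure (s2 u) {of_list w}" for w
  proof (induction w)
    case Nil then show ?case using m1 m2 by (simp add: is_morph_def eps_def)
  next
    case (Cons a w)
    show ?case
    proof
      fix u :: "'x \<Rightarrow> real" assume u: "u \<in> DD"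
      have e: "{of_list (a#w)} = wapp [a] ` {of_list w}"
        by (simp add: of_list_Cons)
      have h1: "emeasure (s1 u) (wapp [a] ` {of_list w}) = emeasure (s1 (tau \<alpha> a u)) {of_list w}"
        using m1 u sing_sets[of w] unfolding is_morph_def by blast
      have h2: "emeasure (s2 u) (wapp [a] ` {of_list w}) = emeasure (s2 (tau \<alpha> a u)) {of_list w}"
        using m2 u sing_sets[of w] unfolding is_morph_def by blast
      show "emeasure (s1 u) {of_list (a#w)} = emeasure (s2 u) {of_list (a#w)}"
        unfolding e h1 h2 using Cons.IH tau_DD[OF PDa u, of a] by blast
    qed
  qed
  have s1: "sets (s1 u) = sigma_sets winf wgen" using m1 u by (simp add: is_morph_def Msub_def sets_Ainf)
  have s2: "sets (s2 u) = sigma_sets winf wgen" using m2 u by (simp add: is_morph_def Msub_def sets_Ainf)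
  show ?thesis
  proof (rule measure_eqI_generator_eq[OF Int_stable_wgen wgen_Pow _ s1 s2, of "\<lambda>_. winf"])
    fix X :: "(nat \<Rightarrow> 'a option) set" assume "X \<in> wgen"
    then consider "X = {}" | w where "X = {of_list w}" | w where "X = wapp w ` winf"
      unfolding wgen_def by blast
    then show "emeasure (s1 u) X = emeasure (s2 u) X"
      by cases (use cyl sing u in auto)
  next
    show "range (\<lambda>_. winf) \<subseteq> wgen" using wapp_Nil_img by (auto simp: wgen_def) (metis wapp_Nil_img)
  next
    show "emeasure (s1 u) winf \<noteq> \<infinity>" for i :: nat using m1 u by (simp add: is_morph_def)
  qed simp
qed

lemma sem_morph: "is_morph \<alpha> (sem \<alpha>)"
  unfolding is_morph_def
proof (intro ballI conjI allI)
  fix u :: "'x \<Rightarrow> real" assume u: "u \<in> DD"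
  have fu: "finite (supp u)" by (rule DD_fin[OF u])
  have w: "emeasure (sem \<alpha> u) winf = ennreal (alpha1 \<alpha> u)"
  proof -
    have "emeasure (sem \<alpha> u) winf = (\<Sum>x\<in>supp u. ennreal (u x))"
      by (simp add: sem_emeasure[OF PDa fu winf_sets[OF PDa]] T_space[OF PDa])
    also have "\<dots> = ennreal (alpha1 \<alpha> u)"
      using DD_nn[OF u] by (simp add: alpha1_def a_sum[OF PDa])
    finally show ?thesis .
  qed
  show "sem \<alpha> u \<in> Msub"
    unfolding Msub_def
  proof (intro CollectI conjI)
    show "sets (sem \<alpha> u) = sets Ainf" by (rule sem_sets[OF PDa])
    show "subprob_space (sem \<alpha> u)"
    proof
      have "emeasure (sem \<alpha> u) winf = ennreal (sum u (supp u))"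
        using w by (simp add: alpha1_def a_sum[OF PDa])
      also have "\<dots> \<le> 1" using DD_sum[OF u] by simp
      finally show "emeasure (sem \<alpha> u) (space (sem \<alpha> u)) \<le> 1" by (simp add: space_sem[OF PDa])
      show "space (sem \<alpha> u) \<noteq> {}" unfolding space_sem[OF PDa] by (metis empty_iff of_list_winf)
    qed
  qed
  show "emeasure (sem \<alpha> u) winf = ennreal (alpha1 \<alpha> u)" by (rule w)
  show "emeasure (sem \<alpha> u) {eps} = ennreal (alphastar \<alpha> u)"
  proof -
    have "emeasure (sem \<alpha> u) {eps} = (\<Sum>x\<in>supp u. ennreal (u x) * ennreal (\<alpha> x None))"
      by (simp add: sem_emeasure[OF PDa fu eps_sets[OF PDa]] T_eps[OF PDa])
    also have "\<dots> = (\<Sum>x\<in>supp u. ennreal (u x * \<alpha> x None))"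
      by (rule sum.cong) (auto simp: ennreal_mult DD_nn[OF u] a_nonneg[OF PDa])
    also have "\<dots> = ennreal (alphastar \<alpha> u)"
      unfolding alphastar_def by (rule sum_ennreal) (auto intro: mult_nonneg_nonneg DD_nn[OF u] a_nonneg[OF PDa])
    finally show ?thesis .
  qed
  fix a and S :: "(nat \<Rightarrow> 'a option) set" assume "S \<in> sets Ainf"
  then show "emeasure (sem \<alpha> u) (wapp [a] ` S) = emeasure (sem \<alpha> (tau \<alpha> a u)) S"
    by (rule sem_tau[OF PDa u])
qed

end

theorem mainTheorem14:
  fixes \<alpha> :: "'x \<Rightarrow> ('a::finite \<times> 'x) option \<Rightarrow> real"
  assumes "\<forall>x. \<alpha> x \<in> PD"
  shows "\<exists>sem. is_morph \<alpha> sem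
           \<and> (\<forall>sem'. is_morph \<alpha> sem' \<longrightarrow> (\<forall>u\<in>DD. sem' u = sem u))
           \<and> (\<forall>u\<in>DD. \<forall>S\<in>sets Ainf.
                emeasure (sem u) S = (\<Sum>x\<in>supp u. ennreal (u x) * emeasure (sem (point_mass x)) S))"
proof (intro exI conjI allI impI ballI)
  show "is_morph \<alpha> (sem \<alpha>)" by (rule sem_morph[OF assms])
  fix sem' and u :: "'x \<Rightarrow> real" assume "is_morph \<alpha> sem'" "u \<in> DD"
  then show "sem' u = sem \<alpha> u" using morph_unique[OF assms _ sem_morph[OF assms]] by blast
next
  fix u :: "'x \<Rightarrow> real" and S :: "(nat \<Rightarrow> 'a option) set" assume u: "u \<in> DD" and S: "S \<in> sets Ainf"
  show "emeasure (sem \<alpha> u) S = (\<Sum>x\<in>supp u. ennreal (u x) * emeasure (sem \<alpha> (point_mass x)) S)"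
    by (simp add: sem_emeasure[OF assms DD_fin[OF u] S] sem_point[OF assms S])
qed


end
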